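(* Let $n\ge 2$ and let $p, p', s \in B_{n}$, regarded as elements of $B_{n+1}$ via the standard inclusion. Then $$p' = s*p \quad \text{in } B_{n+1}$$ if and only if $$p'\, \delta_{n+1}^{-1} = s \cdot d(p)\, \sigma_1\, \delta_{n+1}^{-1} \cdot s^{-1} \quad \text{in } B_{n+1}.$$
   Context: $B_m$ denotes the braid group on $m$ strands with Artin generators $\sigma_1,\dots,\sigma_{m-1}$ and relations $\sigma_i\sigma_j\sigma_i=\sigma_j\sigma_i\sigma_j$ for $|i-j|=1$, $\sigma_i\sigma_j=\sigma_j\sigma_i$ for $|i-j|>1$; $B_\infty$ is the braid group on generators $\sigma_1,\sigma_2,\dots$ with the same relations, and $B_m\subset B_{m+1}\subset B_\infty$ via the generators. The shift $d$ is the monomorphism of $B_\infty$ induced by $\sigma_{i_1}^{\varepsilon_1}\cdots\sigma_{i_k}^{\varepsilon_k}\mapsto \sigma_{i_1+1}^{\varepsilon_1}\cdots\sigma_{i_k+1}^{\varepsilon_k}$. The shifted conjugacy operator is $a*b = a\cdot d(b)\cdot \sigma_1\cdot d(a^{-1})$ for $a,b\in B_\infty$. Also $\delta_{n+1} = \sigma_{n}\sigma_{n-1}\cdots\sigma_1 \in B_{n+1}$. *)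

theory Defs
  imports Main
begin

text \<open>Braid words: a letter (i, True) is the Artin generator sigma_i, (i, False) is its
inverse. Generators are indexed from 1.\<close>

type_synonym bword = "(nat \<times> bool) list"

definition sig :: "nat \<Rightarrow> bword" where
  "sig i = [(i, True)]"

definition binv :: "bword \<Rightarrow> bword" where
  "binv w = rev (map (\<lambda>(i, b). (i, \<not> b)) w)"

definition shift :: "bword \<Rightarrow> bword" where
  "shift w = map (\<lambda>(i, b). (Suc i, b)) w"

definition in_B :: "nat \<Rightarrow> bword \<Rightarrow> bool" where
  "in_B m w \<longleftrightarrow> (\<forall>(i, b) \<in> set w. 1 \<le> i \<and> i < m)"

text \<open>Equality in B_m: the congruence on words generated by free cancellation and the
braid relations among sigma_1, ..., sigma_(m-1).\<close>
inductive braid_eq :: "nat \<Rightarrow> bword \<Rightarrow> bword \<Rightarrow> bool" for m :: nat where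
  refl: "braid_eq m u u"
| sym: "braid_eq m u v \<Longrightarrow> braid_eq m v u"
| trans: "braid_eq m u v \<Longrightarrow> braid_eq m v w \<Longrightarrow> braid_eq m u w"
| ctxt: "braid_eq m u v \<Longrightarrow> braid_eq m (x @ u @ y) (x @ v @ y)"
| cancel: "1 \<le> i \<Longrightarrow> i < m \<Longrightarrow> braid_eq m [(i, b), (i, \<not> b)] []"
| braid: "1 \<le> i \<Longrightarrow> Suc i < m \<Longrightarrow>
    braid_eq m (sig i @ sig (Suc i) @ sig i) (sig (Suc i) @ sig i @ sig (Suc i))"
| comm: "1 \<le> i \<Longrightarrow> Suc i < j \<Longrightarrow> j < m \<Longrightarrow>
    braid_eq m (sig i @ sig j) (sig j @ sig i)"

text \<open>Shifted conjugacy a * b = a d(b) sigma_1 d(a^-1).\<close>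
definition sconj :: "bword \<Rightarrow> bword \<Rightarrow> bword" where
  "sconj a b = a @ shift b @ sig 1 @ shift (binv a)"

text \<open>delta_(n+1) = sigma_n sigma_(n-1) ... sigma_1.\<close>
definition delta :: "nat \<Rightarrow> bword" where
  "delta n = map (\<lambda>i. (i, True)) (rev [1..<n])"

end

theory Submission
  imports Defs
begin

lemma be_app: "braid_eq m u u' \<Longrightarrow> braid_eq m v v' \<Longrightarrow> braid_eq m (u@v) (u'@v')"
proof -
  assume a: "braid_eq m u u'" and b: "braid_eq m v v'"
  have "braid_eq m ([]@u@v) ([]@u'@v)" by (rule braid_eq.ctxt[OF a])
  moreover have "braid_eq m (u'@v@[]) (u'@v'@[])" by (rule braid_eq.ctxt[OF b])
  ultimately show ?thesis by (auto intro: braid_eq.trans)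
qed

lemma be_l: "braid_eq m v v' \<Longrightarrow> braid_eq m (x@v) (x@v')"
  by (rule be_app[OF braid_eq.refl])

lemma be_r: "braid_eq m v v' \<Longrightarrow> braid_eq m (v@x) (v'@x)"
  by (rule be_app[OF _ braid_eq.refl])

lemma binv_cons: "binv (a#w) = binv w @ [(fst a, \<not> snd a)]"
  by (cases a) (simp add: binv_def)

lemma binv_binv: "binv (binv w) = w"
  by (induct w) (auto simp: binv_def)

lemma in_B_binv: "in_B m w \<Longrightarrow> in_B m (binv w)"
  by (auto simp: in_B_def binv_def)

lemma cancel_word: "in_B m w \<Longrightarrow> braid_eq m (w @ binv w) []"
proof (induct w)
  case Nil thus ?case by (simp add: binv_def braid_eq.refl)
next
  case (Cons a w)
  obtain i b where a: "a = (i,b)" by (cases a)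
  have iw: "in_B m w" and ib: "1 \<le> i" "i < m" using Cons.prems a by (auto simp: in_B_def)
  have "braid_eq m ([a] @ (w @ binv w) @ [(i, \<not> b)]) ([a] @ [] @ [(i, \<not> b)])"
    by (rule braid_eq.ctxt[OF Cons.hyps[OF iw]])
  moreover have "braid_eq m [(i,b),(i,\<not>b)] []" by (rule braid_eq.cancel[OF ib])
  ultimately show ?case using a by (auto simp: binv_cons intro: braid_eq.trans)
qed

lemma cancel_word2: "in_B m w \<Longrightarrow> braid_eq m (binv w @ w) []"
  using cancel_word[OF in_B_binv, of m w] by (simp add: binv_binv)

lemma comm_up: "1 \<le> i \<Longrightarrow> \<forall>(j,b)\<in>set w. b \<and> Suc i < j \<and> j < m \<Longrightarrow>
   braid_eq m (sig i @ w) (w @ sig i)"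
proof (induct w)
  case Nil thus ?case by (simp add: braid_eq.refl)
next
  case (Cons a w)
  obtain j b where a: "a = (j,b)" by (cases a)
  have h: "b" "Suc i < j" "j < m" and hw: "\<forall>(j,b)\<in>set w. b \<and> Suc i < j \<and> j < m"
    using Cons.prems a by auto
  have "braid_eq m ((sig i @ sig j) @ w) ((sig j @ sig i) @ w)"
    by (rule be_r, rule braid_eq.comm) (use Cons.prems h in auto)
  moreover have "braid_eq m (sig j @ sig i @ w) (sig j @ w @ sig i)"
    by (rule be_l, rule Cons.hyps[OF Cons.prems(1) hw])
  ultimately show ?case using a h by (auto simp: sig_def intro: braid_eq.trans)
qed

lemma comm_down: "\<forall>(j,b)\<in>set w. b \<and> 1 \<le> j \<and> Suc j < i \<Longrightarrow> i < m \<Longrightarrow>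
   braid_eq m (sig i @ w) (w @ sig i)"
proof (induct w)
  case Nil thus ?case by (simp add: braid_eq.refl)
next
  case (Cons a w)
  obtain j b where a: "a = (j,b)" by (cases a)
  have h: "b" "1 \<le> j" "Suc j < i" and hw: "\<forall>(j,b)\<in>set w. b \<and> 1 \<le> j \<and> Suc j < i"
    using Cons.prems a by auto
  have "braid_eq m ((sig i @ sig j) @ w) ((sig j @ sig i) @ w)"
    by (rule be_r, rule braid_eq.sym, rule braid_eq.comm) (use Cons.prems h in auto)
  moreover have "braid_eq m (sig j @ sig i @ w) (sig j @ w @ sig i)"
    by (rule be_l, rule Cons.hyps[OF hw Cons.prems(2)])
  ultimately show ?case using a h by (auto simp: sig_def intro: braid_eq.trans)
qed

lemma delta_split:
  assumes "1 \<le> i" "i < n"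
  shows "delta (Suc n) = map (\<lambda>i. (i, True)) (rev [Suc (Suc i)..<Suc n]) @ sig (Suc i) @ sig i
           @ map (\<lambda>i. (i, True)) (rev [1..<i])"
proof -
  have "[1..<Suc n] = [1..<i] @ [i..<Suc n]"
    using assms by (metis le_add_diff_inverse less_imp_le_nat le_SucI upt_add_eq_append)
  moreover have "[i..<Suc n] = i # Suc i # [Suc (Suc i)..<Suc n]"
    using assms by (simp add: upt_conv_Cons)
  ultimately show ?thesis by (simp add: delta_def sig_def)
qed

lemma delta_gen:
  assumes "1 \<le> i" "i < n"
  shows "braid_eq (Suc n) (delta (Suc n) @ sig (Suc i)) (sig i @ delta (Suc n))"
proof -
  define A where "A = map (\<lambda>i. (i, True)) (rev [Suc (Suc i)..<Suc n])"
  define C where "C = map (\<lambda>i. (i, True)) (rev [1..<i])"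
  have D: "delta (Suc n) = A @ sig (Suc i) @ sig i @ C"
    using delta_split[OF assms] by (simp add: A_def C_def)
  have c1: "braid_eq (Suc n) (sig (Suc i) @ C) (C @ sig (Suc i))"
    by (rule comm_down) (use assms in \<open>auto simp: C_def\<close>)
  have c2: "braid_eq (Suc n) (sig i @ A) (A @ sig i)"
    by (rule comm_up) (use assms in \<open>auto simp: A_def\<close>)
  have b: "braid_eq (Suc n) (sig (Suc i) @ sig i @ sig (Suc i)) (sig i @ sig (Suc i) @ sig i)"
    by (rule braid_eq.sym, rule braid_eq.braid) (use assms in auto)
  have "braid_eq (Suc n) (A @ sig (Suc i) @ sig i @ (C @ sig (Suc i)))
          (A @ sig (Suc i) @ sig i @ (sig (Suc i) @ C))"
    by (rule be_l, rule be_l, rule be_l, rule braid_eq.sym, rule c1)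
  moreover have "braid_eq (Suc n) (A @ (sig (Suc i) @ sig i @ sig (Suc i)) @ C)
          (A @ (sig i @ sig (Suc i) @ sig i) @ C)"
    by (rule braid_eq.ctxt[OF b])
  moreover have "braid_eq (Suc n) ((A @ sig i) @ sig (Suc i) @ sig i @ C)
          ((sig i @ A) @ sig (Suc i) @ sig i @ C)"
    by (rule be_r, rule braid_eq.sym, rule c2)
  ultimately show ?thesis unfolding D by (auto intro: braid_eq.trans)
qed

lemma delta_letter:
  assumes "1 \<le> i" "i < n"
  shows "braid_eq (Suc n) (delta (Suc n) @ [(Suc i, b)]) ([(i, b)] @ delta (Suc n))"
proof (cases b)
  case True thus ?thesis using delta_gen[OF assms] by (simp add: sig_def)
next
  case False
  let ?D = "delta (Suc n)"
  have c1: "braid_eq (Suc n) [(Suc i, True), (Suc i, False)] []"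
    using braid_eq.cancel[of "Suc i" "Suc n" True] assms by simp
  have c2: "braid_eq (Suc n) [(i, False), (i, True)] []"
    using braid_eq.cancel[of i "Suc n" False] assms by simp
  have "braid_eq (Suc n) (([(i,False)] @ ?D) @ [] @ []) (([(i,False)] @ ?D) @ [(Suc i, True), (Suc i, False)] @ [])"
    by (rule braid_eq.sym, rule braid_eq.ctxt[OF c1])
  moreover have "braid_eq (Suc n) ([(i,False)] @ (?D @ sig (Suc i)) @ [(Suc i, False)])
     ([(i,False)] @ (sig i @ ?D) @ [(Suc i, False)])"
    by (rule braid_eq.ctxt[OF delta_gen[OF assms]])
  moreover have "braid_eq (Suc n) ([] @ [(i, False), (i, True)] @ ?D @ [(Suc i, False)])
     ([] @ [] @ ?D @ [(Suc i, False)])"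
    by (rule braid_eq.ctxt[OF c2])
  ultimately have "braid_eq (Suc n) ([(i,False)] @ ?D) (?D @ [(Suc i, False)])"
    by (auto simp: sig_def intro: braid_eq.trans)
  thus ?thesis using False by (auto intro: braid_eq.sym)
qed

lemma delta_word:
  "in_B n w \<Longrightarrow> braid_eq (Suc n) (delta (Suc n) @ shift w) (w @ delta (Suc n))"
proof (induct w)
  case Nil thus ?case by (simp add: shift_def braid_eq.refl)
next
  case (Cons a w)
  obtain i b where a: "a = (i,b)" by (cases a)
  have iw: "in_B n w" and ib: "1 \<le> i" "i < n" using Cons.prems a by (auto simp: in_B_def)
  have "braid_eq (Suc n) ((delta (Suc n) @ [(Suc i, b)]) @ shift w) (([(i, b)] @ delta (Suc n)) @ shift w)"
    by (rule be_r, rule delta_letter[OF ib])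
  moreover have "braid_eq (Suc n) ([(i, b)] @ delta (Suc n) @ shift w) ([(i, b)] @ w @ delta (Suc n))"
    by (rule be_l, rule Cons.hyps[OF iw])
  ultimately show ?case using a by (auto simp: shift_def intro: braid_eq.trans)
qed

lemma in_B_delta: "in_B (Suc n) (delta (Suc n))"
  by (auto simp: in_B_def delta_def)

lemma in_B_mono: "in_B n w \<Longrightarrow> in_B (Suc n) w"
  by (auto simp: in_B_def)

theorem proposition1:
  fixes n :: nat and p p' s :: bword
  assumes "n \<ge> 2" and "in_B n p" and "in_B n p'" and "in_B n s"
  shows "braid_eq (Suc n) p' (sconj s p) \<longleftrightarrow>
         braid_eq (Suc n) (p' @ binv (delta (Suc n)))
                          (s @ shift p @ sig 1 @ binv (delta (Suc n)) @ binv s)"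
proof -
  let ?D = "delta (Suc n)" and ?Di = "binv (delta (Suc n))"
  let ?X = "s @ shift p @ sig 1"
  have dd: "braid_eq (Suc n) (?D @ ?Di) []" by (rule cancel_word[OF in_B_delta])
  have dd2: "braid_eq (Suc n) (?Di @ ?D) []" by (rule cancel_word2[OF in_B_delta])
  have key0: "braid_eq (Suc n) (?D @ shift (binv s)) (binv s @ ?D)"
    by (rule delta_word[OF in_B_binv[OF assms(4)]])
  have key: "braid_eq (Suc n) (shift (binv s) @ ?Di) (?Di @ binv s)"
  proof -
    have "braid_eq (Suc n) ([] @ shift (binv s) @ ?Di) ((?Di @ ?D) @ shift (binv s) @ ?Di)"
      by (rule be_r, rule braid_eq.sym, rule dd2)
    moreover have "braid_eq (Suc n) (?Di @ (?D @ shift (binv s)) @ ?Di) (?Di @ (binv s @ ?D) @ ?Di)"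
      by (rule braid_eq.ctxt[OF key0])
    moreover have "braid_eq (Suc n) ((?Di @ binv s) @ (?D @ ?Di) @ []) ((?Di @ binv s) @ [] @ [])"
      by (rule braid_eq.ctxt[OF dd])
    ultimately show ?thesis by (auto intro: braid_eq.trans)
  qed
  have e: "braid_eq (Suc n) (sconj s p @ ?Di) (?X @ ?Di @ binv s)"
    using be_l[OF key, of ?X] by (simp add: sconj_def)
  show ?thesis
  proof
    assume h: "braid_eq (Suc n) p' (sconj s p)"
    have "braid_eq (Suc n) (p' @ ?Di) (sconj s p @ ?Di)" by (rule be_r[OF h])
    with e have "braid_eq (Suc n) (p' @ ?Di) (?X @ ?Di @ binv s)"
      by (blast intro: braid_eq.trans)
    thus "braid_eq (Suc n) (p' @ ?Di) (s @ shift p @ sig 1 @ ?Di @ binv s)" by simp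
  next
    assume h: "braid_eq (Suc n) (p' @ ?Di) (s @ shift p @ sig 1 @ ?Di @ binv s)"
    have h2: "braid_eq (Suc n) (p' @ ?Di) (sconj s p @ ?Di)"
      using h e by (auto intro: braid_eq.trans braid_eq.sym)
    have "braid_eq (Suc n) (p' @ []) (p' @ ?Di @ ?D)"
      by (rule be_l, rule braid_eq.sym, rule dd2)
    moreover have "braid_eq (Suc n) ((p' @ ?Di) @ ?D) ((sconj s p @ ?Di) @ ?D)"
      by (rule be_r[OF h2])
    moreover have "braid_eq (Suc n) (sconj s p @ ?Di @ ?D) (sconj s p @ [])"
      by (rule be_l[OF dd2])
    ultimately show "braid_eq (Suc n) p' (sconj s p)" by (auto intro: braid_eq.trans)
  qed
qed

end
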